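(* Let $c\in(0,1)$, $f_{\mathrm{cost}}(x)=x^c$, and $F_{\mathrm{cost}}(p)=\sum_i f_{\mathrm{cost}}(p(i))$. For any finite set $S$ of $m$ discrete probability distributions, the greedy coupling $\mathcal G_S$ satisfies $F_{\mathrm{cost}}(\mathcal G_S)\le\left(\frac12+\frac{1}{c\,2^c}\right)F_{\mathrm{cost}}(C)$ for every coupling $C$ of $S$.
   Context: A coupling of $S=\{p_1,\dots,p_m\}$ is a joint distribution with marginals $p_1,\dots,p_m$; its cost is $F_{\mathrm{cost}}$ applied to its vector of probabilities. Greedy coupling algorithm: maintain the remaining masses of the states of each distribution in $S$. Repeatedly: let $r=\min_{p\in S}\max_j p(j)$; if $r=0$ stop; otherwise append $r$ as the next state of $\mathcal G_S$ and subtract $r$ from the largest remaining state of every distribution (ties broken arbitrarily). $\mathcal G_S$ is the resulting list of state masses. *)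

theory Defs
  imports Complex_Main
begin

definition is_dist :: "real list \<Rightarrow> bool" where
  "is_dist p \<longleftrightarrow> (\<forall>x\<in>set p. 0 \<le> x) \<and> sum_list p = 1"

definition tuples :: "real list list \<Rightarrow> nat list set" where
  "tuples S = {js. length js = length S \<and> (\<forall>k<length S. js ! k < length (S ! k))}"

definition coupling :: "real list list \<Rightarrow> (nat list \<Rightarrow> real) \<Rightarrow> bool" where
  "coupling S C \<longleftrightarrow> (\<forall>js\<in>tuples S. 0 \<le> C js) \<and>
     (\<forall>k<length S. \<forall>j<length (S ! k).
        (\<Sum>js\<in>{js\<in>tuples S. js ! k = j}. C js) = S ! k ! j)"

definition Fcost_list :: "real \<Rightarrow> real list \<Rightarrow> real" where
  "Fcost_list c xs = (\<Sum>x\<leftarrow>xs. x powr c)"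

definition Fcost_coupling :: "real \<Rightarrow> real list list \<Rightarrow> (nat list \<Rightarrow> real) \<Rightarrow> real" where
  "Fcost_coupling c S C = (\<Sum>js\<in>tuples S. C js powr c)"

definition greedy_r :: "real list list \<Rightarrow> real" where
  "greedy_r rs = Min ((\<lambda>q. Max (set q)) ` set rs)"

text \<open>greedy rs G: G is a possible output of the greedy coupling algorithm started with
  remaining masses rs, for some (arbitrary) tie-breaking.\<close>
inductive greedy :: "real list list \<Rightarrow> real list \<Rightarrow> bool" where
  stop: "greedy_r rs = 0 \<Longrightarrow> greedy rs []"
| step: "greedy_r rs \<noteq> 0 \<Longrightarrow> length js = length rs \<Longrightarrow>
    (\<forall>k<length rs. js ! k < length (rs ! k) \<and> rs ! k ! (js ! k) = Max (set (rs ! k))) \<Longrightarrow>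
    greedy (map (\<lambda>k. (rs ! k)[js ! k := rs ! k ! (js ! k) - greedy_r rs]) [0..<length rs]) G \<Longrightarrow>
    greedy rs (greedy_r rs # G)"

end

theory Submission
  imports Defs "HOL-Analysis.Analysis"
begin


lemma div_flip: "((x::real) - y) / (c - 1) = (y - x) / (1 - c)"
proof -
  have "(x - y) / (c - 1) = (-(x - y)) / (-(c - 1))" by (simp only: minus_divide_divide)
  then show ?thesis by simp
qed

lemma alg1: "(x::real) * ((P - 1)/d) = (x*P - x)/d"
  by (simp add: right_diff_distrib)

lemma alg2:
  fixes A B y P Q c :: real
  assumes "(y/2) * P = A" "y * Q = B" "0 < c" "c < 1"
  shows "(1-c) * (A / c + (y/2) * ((P - Q) / (1-c)) + y * ((Q - 1 powr (c-1)) / (1-c))) = A / c + B / 2 - y"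
proof -
  have a1: "(y/2) * ((P - Q) / (1-c)) = (A - B/2) / (1-c)"
    using assms(1,2) by (simp add: right_diff_distrib)
  have a2: "y * ((Q - 1 powr (c-1)) / (1-c)) = (B - y)/(1-c)"
    using assms(2) by (simp add: right_diff_distrib)
  have e2: "(1-c) * (A/c + (A - B/2) / (1-c) + (B - y)/(1-c)) = (1-c) * (A/c) + (A - B/2) + (B - y)"
    using assms(3,4) by (simp add: distrib_left)
  have e3: "(1-c) * (A/c) = A/c - A"
    using assms(3) by (simp add: left_diff_distrib diff_divide_distrib)
  show ?thesis unfolding a1 a2 e2 e3 by simp
qed

lemma ftc_pow:
  fixes c u v :: real
  assumes "0 < u" "u \<le> v" "c < 1"
  shows "((\<lambda>s. s powr (c-2)) has_integral ((u powr (c-1) - v powr (c-1)) / (1-c))) {u..v}"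
proof -
  have "((\<lambda>s. s powr (c-2)) has_integral ((\<lambda>s. s powr (c-1) / (c-1)) v - (\<lambda>s. s powr (c-1) / (c-1)) u)) {u..v}"
  proof (rule fundamental_theorem_of_calculus[OF assms(2)])
    fix x assume "x \<in> {u..v}"
    then have x: "x > 0" using assms by auto
    have "((\<lambda>s. s powr (c-1) / (c-1)) has_real_derivative ((c-1) * x powr (c-1-1)) / (c-1)) (at x)"
      by (rule DERIV_cdivide[OF has_real_derivative_powr[OF x]])
    moreover have "((c-1) * x powr (c-1-1)) / (c-1) = x powr (c-2)" using assms by simp
    ultimately show "((\<lambda>s. s powr (c-1) / (c-1)) has_vector_derivative x powr (c-2)) (at x within {u..v})"
      by (metis has_real_derivative_iff_has_vector_derivative has_vector_derivative_at_within)
  qed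
  moreover have "(\<lambda>s. s powr (c-1) / (c-1)) v - (\<lambda>s. s powr (c-1) / (c-1)) u = (u powr (c-1) - v powr (c-1)) / (1-c)"
    by (simp only: diff_divide_distrib[symmetric] div_flip)
  ultimately show ?thesis by simp
qed

lemma ftc_pow0:
  fixes c u :: real
  assumes "0 \<le> u" "0 < c"
  shows "((\<lambda>s. s powr (c-1)) has_integral (u powr c / c)) {0..u}"
proof -
  have "((\<lambda>s. s powr (c-1)) has_integral ((\<lambda>s. s powr c / c) u - (\<lambda>s. s powr c / c) 0)) {0..u}"
  proof (rule fundamental_theorem_of_calculus_interior[OF assms(1)])
    show "continuous_on {0..u} (\<lambda>s. s powr c / c)"
      using assms by (intro continuous_intros continuous_on_powr') auto
    fix x assume "x \<in> {0<..<u}"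
    then have x: "x > 0" by auto
    have "((\<lambda>s. s powr c / c) has_real_derivative (c * x powr (c-1)) / c) (at x)"
      by (rule DERIV_cdivide[OF has_real_derivative_powr[OF x]])
    moreover have "(c * x powr (c-1)) / c = x powr (c-1)" using assms by simp
    ultimately show "((\<lambda>s. s powr c / c) has_vector_derivative x powr (c-1)) (at x)"
      by (metis has_real_derivative_iff_has_vector_derivative)
  qed
  then show ?thesis by simp
qed

definition gpsi :: "real \<Rightarrow> real \<Rightarrow> real" where
  "gpsi s y = (if y \<le> s then y else (if y \<le> 2 * s then y / 2 else s))"

lemma int_theta:
  fixes c x :: real
  assumes c: "0 < c" "c < 1" and x: "0 \<le> x" "x \<le> 1"
  shows "((\<lambda>s. (if x \<le> s then x else 0) * s powr (c-2)) has_integral ((x powr c - x)/(1-c))) {0..1}"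
proof (cases "x = 0")
  case True
  have "((\<lambda>s. (if x \<le> s then x else 0) * s powr (c-2)) has_integral 0) {0..1}"
    by (rule has_integral_spike_finite[OF finite.emptyI _ has_integral_0]) (simp add: True)
  then show ?thesis by (simp add: True)
next
  case False
  then have xp: "x > 0" using x by auto
  have h1: "((\<lambda>s. (if x \<le> s then x else 0) * s powr (c-2)) has_integral 0) {0..x}"
    by (rule has_integral_spike_finite[of "{x}", OF _ _ has_integral_0]) auto
  have h2: "((\<lambda>s. (if x \<le> s then x else 0) * s powr (c-2)) has_integral (x * ((x powr (c-1) - 1 powr (c-1)) / (1-c)))) {x..1}"
    by (rule has_integral_spike_finite[OF finite.emptyI _ has_integral_mult_right[OF ftc_pow[OF xp x(2) c(2)], of x]]) auto
  have hc: "((\<lambda>s. (if x \<le> s then x else 0) * s powr (c-2)) has_integral (0 + x * ((x powr (c-1) - 1 powr (c-1)) / (1-c)))) {0..1}"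
    by (rule has_integral_combine[OF x h1 h2])
  have "x * x powr (c-1) = x powr c"
  proof -
    have "x * x powr (c-1) = x powr (1 + (c-1))" by (rule powr_mult_base) (use xp in auto)
    then show ?thesis by simp
  qed
  then have eq: "0 + x * ((x powr (c-1) - 1 powr (c-1)) / (1-c)) = (x powr c - x)/(1-c)"
    by (simp only: powr_one_eq_one add_0_left alg1)
  show ?thesis using hc by (simp only: eq)
qed

definition Vpsi :: "real \<Rightarrow> real \<Rightarrow> real" where
  "Vpsi c y = (y/2) powr c / c + (y/2) * (((y/2) powr (c-1) - y powr (c-1)) / (1-c))
      + y * ((y powr (c-1) - 1 powr (c-1)) / (1-c))"

lemma int_gpsi:
  fixes c y :: real
  assumes c: "0 < c" "c < 1" and y: "0 \<le> y" "y \<le> 1"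
  shows "((\<lambda>s. gpsi s y * s powr (c-2)) has_integral Vpsi c y) {0..1}"
proof (cases "y = 0")
  case True
  have "((\<lambda>s. gpsi s y * s powr (c-2)) has_integral 0) {0..1}"
    by (rule has_integral_spike_finite[OF finite.emptyI _ has_integral_0]) (auto simp: True gpsi_def)
  then show ?thesis by (simp add: True Vpsi_def)
next
  case False
  then have yp: "y > 0" using y by auto
  have h1: "((\<lambda>s. gpsi s y * s powr (c-2)) has_integral ((y/2) powr c / c)) {0..y/2}"
  proof (rule has_integral_spike_finite[where S="{}", OF _ _ ftc_pow0])
    fix s assume s: "s \<in> {0..y/2} - {}"
    show "gpsi s y * s powr (c-2) = s powr (c-1)"
    proof (cases "s = 0")
      case True then show ?thesis using yp by (simp add: gpsi_def)
    next
      case False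
      then have "s > 0" using s by auto
      moreover have "gpsi s y = s" using s yp by (auto simp: gpsi_def)
      ultimately show ?thesis by (simp add: powr_mult_base)
    qed
  qed (use yp c in auto)
  have h2: "((\<lambda>s. gpsi s y * s powr (c-2)) has_integral ((y/2) * (((y/2) powr (c-1) - y powr (c-1)) / (1-c)))) {y/2..y}"
    by (rule has_integral_spike_finite[of "{y}", OF _ _ has_integral_mult_right[OF ftc_pow[of "y/2" y c], of "y/2"]]) (use yp c in \<open>auto simp: gpsi_def\<close>)
  have h3: "((\<lambda>s. gpsi s y * s powr (c-2)) has_integral (y * ((y powr (c-1) - 1 powr (c-1)) / (1-c)))) {y..1}"
    by (rule has_integral_spike_finite[OF finite.emptyI _ has_integral_mult_right[OF ftc_pow[of y 1 c], of y]]) (use yp c y in \<open>auto simp: gpsi_def\<close>)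
  show ?thesis unfolding Vpsi_def
    by (rule has_integral_combine[OF _ _ has_integral_combine[OF _ _ h1 h2] h3]) (use yp y in auto)
qed

lemma Vpsi_eq:
  fixes c y :: real
  assumes c: "0 < c" "c < 1" and y: "0 \<le> y"
  shows "(1-c) * Vpsi c y = y powr c / 2 + y powr c / (c * 2 powr c) - y"
proof (cases "y = 0")
  case True then show ?thesis by (simp add: Vpsi_def)
next
  case False
  then have yp: "y > 0" using y by auto
  have a: "(y/2) * (y/2) powr (c-1) = (y/2) powr c"
  proof -
    have "(y/2) * (y/2) powr (c-1) = (y/2) powr (1 + (c-1))" by (rule powr_mult_base) (use yp in auto)
    then show ?thesis by simp
  qed
  have b: "y * y powr (c-1) = y powr c" using yp by (simp add: powr_mult_base)
  have d: "(y/2) powr c = y powr c / 2 powr c" using yp by (simp add: powr_divide)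
  have "(1-c) * Vpsi c y = (y/2) powr c / c + y powr c / 2 - y"
    unfolding Vpsi_def by (rule alg2[OF a b]) (use c in auto)
  also have "\<dots> = y powr c / 2 + y powr c / (c * 2 powr c) - y"
    unfolding d by simp
  finally show ?thesis .
qed



lemma gpsi_nonneg: "0 \<le> y \<Longrightarrow> 0 < s \<Longrightarrow> 0 \<le> gpsi s y"
  by (auto simp: gpsi_def)

lemma gpsi_id: "y \<le> s \<Longrightarrow> gpsi s y = y"
  by (auto simp: gpsi_def)

lemma gpsi_sub: "0 \<le> a \<Longrightarrow> 0 \<le> b \<Longrightarrow> 0 < s \<Longrightarrow> gpsi s (a+b) \<le> gpsi s a + gpsi s b"
  unfolding gpsi_def by (auto split: if_splits)

lemma gpsi_dec: "s < r \<Longrightarrow> r \<le> x \<Longrightarrow> 0 < s \<Longrightarrow> gpsi s (x - r) \<le> gpsi s x"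
  unfolding gpsi_def by (auto split: if_splits)

lemma gpsi_sum:
  assumes "finite A" "\<forall>i\<in>A. 0 \<le> f i" "0 < s"
  shows "gpsi s (sum f A) \<le> (\<Sum>i\<in>A. gpsi s (f i))"
  using assms
proof (induction A rule: finite_induct)
  case empty then show ?case by (simp add: gpsi_def)
next
  case (insert x F)
  have "gpsi s (sum f (insert x F)) = gpsi s (f x + sum f F)" using insert by simp
  also have "\<dots> \<le> gpsi s (f x) + gpsi s (sum f F)"
    by (rule gpsi_sub) (use insert in \<open>auto intro: sum_nonneg\<close>)
  also have "\<dots> \<le> gpsi s (f x) + (\<Sum>i\<in>F. gpsi s (f i))" using insert by simp
  finally show ?case using insert by simp
qed

definition ginv :: "real list list \<Rightarrow> real \<Rightarrow> bool" where
  "ginv rs \<sigma> \<longleftrightarrow> rs \<noteq> [] \<and> (\<forall>k<length rs. rs!k \<noteq> [] \<and> (\<forall>i<length (rs!k). 0 \<le> rs!k!i) \<and> sum_list (rs!k) = \<sigma>)"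

lemma ginv_r:
  assumes "ginv rs \<sigma>"
  shows "(\<exists>k<length rs. Max (set (rs!k)) = greedy_r rs) \<and> (\<forall>k<length rs. greedy_r rs \<le> Max (set (rs!k))) \<and> 0 \<le> greedy_r rs"
proof -
  have ne: "rs \<noteq> []" using assms by (simp add: ginv_def)
  have fin: "finite ((\<lambda>q. Max (set q)) ` set rs)" by simp
  have ne2: "(\<lambda>q. Max (set q)) ` set rs \<noteq> {}" using ne by simp
  have m: "greedy_r rs \<in> (\<lambda>q. Max (set q)) ` set rs" unfolding greedy_r_def using Min_in[OF fin ne2] .
  then obtain q where q: "q \<in> set rs" "Max (set q) = greedy_r rs" by auto
  then obtain k where k: "k < length rs" "rs!k = q" by (auto simp: in_set_conv_nth)
  have le: "\<forall>k<length rs. greedy_r rs \<le> Max (set (rs!k))"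
    unfolding greedy_r_def by (auto intro!: Min_le)
  have "rs!k \<noteq> []" "0 \<le> rs!k!0" using assms k by (auto simp: ginv_def)
  then have "0 \<le> Max (set (rs!k))"
    by (meson List.finite_set Max_ge dual_order.trans nth_mem length_greater_0_conv)
  then show ?thesis using k q le by auto
qed

lemma sum_list_upd_real: "i < length xs \<Longrightarrow> sum_list (xs[i := v]) = sum_list xs - xs!i + (v::real)"
  by (induction xs arbitrary: i) (auto split: nat.splits)

lemma sum_list_filter_le: "(\<forall>x\<in>set xs. 0 \<le> (x::real)) \<Longrightarrow> sum_list (filter P xs) \<le> sum_list xs"
  by (induction xs) auto

lemma sum_list_zeros: "\<forall>x\<in>set xs. x = 0 \<Longrightarrow> sum_list xs = (0::real)"
  by (induction xs) auto

lemma greedy_main: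
  assumes "greedy rs G" "ginv rs \<sigma>"
  shows "sum_list G = \<sigma> \<and> (\<forall>g\<in>set G. 0 \<le> g) \<and>
     (\<forall>s>0. \<exists>k<length rs. sum_list (filter (\<lambda>g. g \<le> s) G) \<le> sum_list (map (gpsi s) (rs!k)))"
  using assms
proof (induction arbitrary: \<sigma> rule: greedy.induct)
  case (stop rs)
  obtain k where k: "k < length rs" "Max (set (rs!k)) = 0" using ginv_r[OF stop(2)] stop(1) by auto
  have ne: "rs!k \<noteq> []" and nn: "\<forall>i<length (rs!k). 0 \<le> rs!k!i" and sm: "sum_list (rs!k) = \<sigma>"
    using stop(2) k by (auto simp: ginv_def)
  have "\<forall>x\<in>set (rs!k). x = 0"
  proof
    fix x assume x: "x \<in> set (rs!k)"
    then have "x \<le> 0" using k(2) Max_ge[of "set (rs!k)" x] by auto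
    moreover have "0 \<le> x" using x nn by (auto simp: in_set_conv_nth)
    ultimately show "x = 0" by simp
  qed
  then have "sum_list (rs!k) = 0" by (rule sum_list_zeros)
  then have "\<sigma> = 0" using sm by simp
  moreover have "\<forall>s>0. \<exists>k<length rs. sum_list (filter (\<lambda>g. g \<le> s) []) \<le> sum_list (map (gpsi s) (rs!k))"
  proof (intro allI impI)
    fix s :: real assume s: "s > 0"
    have "0 \<le> sum_list (map (gpsi s) (rs!k))"
      using nn s by (intro sum_list_nonneg) (auto simp: in_set_conv_nth intro!: gpsi_nonneg)
    then show "\<exists>k<length rs. sum_list (filter (\<lambda>g. g \<le> s) []) \<le> sum_list (map (gpsi s) (rs!k))"
      using k by auto
  qed
  ultimately show ?case by simp
next
  case (step rs js G)
  define r where "r = greedy_r rs"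
  define rs' where "rs' = map (\<lambda>k. (rs ! k)[js ! k := rs ! k ! (js ! k) - greedy_r rs]) [0..<length rs]"
  have R: "(\<exists>k<length rs. Max (set (rs!k)) = r) \<and> (\<forall>k<length rs. r \<le> Max (set (rs!k))) \<and> 0 \<le> r"
    using ginv_r[OF step.prems] unfolding r_def .
  have inv: "ginv rs \<sigma>" by (rule step.prems)
  have len: "length rs' = length rs" by (simp add: rs'_def)
  have rsk: "rs'!k = (rs ! k)[js ! k := rs ! k ! (js ! k) - r]" if "k < length rs" for k
    using that by (simp add: rs'_def r_def)
  have inv': "ginv rs' (\<sigma> - r)"
    unfolding ginv_def
  proof (intro conjI)
    show "rs' \<noteq> []" using inv len by (auto simp: ginv_def)
    show "\<forall>k<length rs'. rs'!k \<noteq> [] \<and> (\<forall>i<length (rs'!k). 0 \<le> rs'!k!i) \<and> sum_list (rs'!k) = \<sigma> - r"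
    proof (intro allI impI)
      fix k assume "k < length rs'"
      then have k: "k < length rs" using len by simp
      have jk: "js!k < length (rs!k)" "rs!k!(js!k) = Max (set (rs!k))" using step(3) k by auto
      have "r \<le> rs!k!(js!k)" using R k jk by auto
      have A: "rs'!k \<noteq> []" using inv k by (simp add: rsk ginv_def)
      have B: "\<forall>i<length (rs'!k). 0 \<le> rs'!k!i"
      proof (intro allI impI)
        fix i assume "i < length (rs'!k)"
        then have i: "i < length (rs!k)" using k by (simp add: rsk)
        have "0 \<le> rs!k!i" using inv k i by (auto simp: ginv_def)
        then show "0 \<le> rs'!k!i"
          using \<open>r \<le> rs!k!(js!k)\<close> i jk by (simp add: rsk[OF k] nth_list_update)
      qed
      have C: "sum_list (rs'!k) = \<sigma> - r"
        using inv k jk by (simp add: rsk sum_list_upd_real ginv_def)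
      show "rs'!k \<noteq> [] \<and> (\<forall>i<length (rs'!k). 0 \<le> rs'!k!i) \<and> sum_list (rs'!k) = \<sigma> - r"
        using A B C by blast
    qed
  qed
  have IH: "sum_list G = \<sigma> - r \<and> (\<forall>g\<in>set G. 0 \<le> g) \<and>
     (\<forall>s>0. \<exists>k<length rs'. sum_list (filter (\<lambda>g. g \<le> s) G) \<le> sum_list (map (gpsi s) (rs'!k)))"
    using step.IH[OF inv'[unfolded rs'_def]] unfolding rs'_def r_def .
  have part3: "\<exists>k<length rs. sum_list (filter (\<lambda>g. g \<le> s) (r # G)) \<le> sum_list (map (gpsi s) (rs!k))"
    if s: "s > 0" for s
  proof (cases "r \<le> s")
    case True
    obtain k where k: "k < length rs" "Max (set (rs!k)) = r" using R by auto
    have "\<forall>x\<in>set (rs!k). x \<le> s"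
    proof
      fix x assume "x \<in> set (rs!k)"
      then have "x \<le> Max (set (rs!k))" by (simp add: Max_ge)
      then show "x \<le> s" using k True by simp
    qed
    then have "map (gpsi s) (rs!k) = rs!k" by (auto intro!: map_idI gpsi_id)
    then have "sum_list (map (gpsi s) (rs!k)) = \<sigma>" using inv k by (simp add: ginv_def)
    moreover have "sum_list (filter (\<lambda>g. g \<le> s) (r # G)) \<le> r + sum_list G"
      using True IH sum_list_filter_le[of G "\<lambda>g. g \<le> s"] by simp
    ultimately show ?thesis using IH k by auto
  next
    case False
    obtain k where k: "k < length rs" and kb: "sum_list (filter (\<lambda>g. g \<le> s) G) \<le> sum_list (map (gpsi s) (rs'!k))"
      using IH s len by auto
    have jk: "js!k < length (rs!k)" "rs!k!(js!k) = Max (set (rs!k))" using step(3) k by auto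
    have "r \<le> rs!k!(js!k)" using R k jk by auto
    have "sum_list (map (gpsi s) (rs'!k)) = sum_list (map (gpsi s) (rs!k)) - gpsi s (rs!k!(js!k)) + gpsi s (rs!k!(js!k) - r)"
      using jk by (simp add: rsk[OF k] map_update sum_list_upd_real)
    also have "\<dots> \<le> sum_list (map (gpsi s) (rs!k))"
      using gpsi_dec[of s r "rs!k!(js!k)"] False s \<open>r \<le> rs!k!(js!k)\<close> by simp
    finally show ?thesis using kb k False by auto
  qed
  show ?case using IH R part3 unfolding r_def[symmetric] by auto
qed



lemma finite_tuples: "finite (tuples S)"
proof -
  define M where "M = sum_list (map length S)"
  have "tuples S \<subseteq> {js. set js \<subseteq> {..<M} \<and> length js = length S}"
  proof
    fix js assume js: "js \<in> tuples S"
    have "set js \<subseteq> {..<M}"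
    proof
      fix x assume "x \<in> set js"
      then obtain k where k: "k < length js" "js!k = x" by (auto simp: in_set_conv_nth)
      then have k': "k < length S" "x < length (S!k)" using js by (auto simp: tuples_def)
      have "length (S!k) \<in> set (map length S)" using k'(1) by auto
      then have "length (S!k) \<le> M" unfolding M_def by (intro member_le_sum_list) auto
      then show "x \<in> {..<M}" using k' by auto
    qed
    then show "js \<in> {js. set js \<subseteq> {..<M} \<and> length js = length S}" using js by (auto simp: tuples_def)
  qed
  moreover have "finite {js. set js \<subseteq> {..<M} \<and> length js = length S}"
    by (rule finite_lists_length_eq) simp
  ultimately show ?thesis by (rule finite_subset)
qed

lemma coupling_group:
  assumes "coupling S C" "k < length S"
  shows "(\<Sum>j\<in>{0..<length (S!k)}. h (\<Sum>js\<in>{js\<in>tuples S. js ! k = j}. C js)) = (\<Sum>j\<in>{0..<length (S!k)}. h (S!k!j))"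
  using assms by (auto simp: coupling_def intro!: sum.cong)

lemma group_tuples:
  assumes "k < length S"
  shows "(\<Sum>j\<in>{0..<length (S!k)}. \<Sum>js\<in>{js\<in>tuples S. js ! k = j}. f js) = (\<Sum>js\<in>tuples S. f js)"
proof (rule sum.group[OF finite_tuples finite_atLeastLessThan])
  show "(\<lambda>js. js ! k) ` tuples S \<subseteq> {0..<length (S ! k)}"
    using assms by (auto simp: tuples_def)
qed

lemma sum_list_as_sum: "sum_list (map f xs) = (\<Sum>j\<in>{0..<length xs}. f (xs!j))"
  by (simp add: sum_list_sum_nth)

lemma coupling_total:
  assumes "coupling S C" "k < length S"
  shows "(\<Sum>js\<in>tuples S. C js) = sum_list (S!k)"
proof -
  have "(\<Sum>js\<in>tuples S. C js) = (\<Sum>j\<in>{0..<length (S!k)}. \<Sum>js\<in>{js\<in>tuples S. js ! k = j}. C js)"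
    using group_tuples[OF assms(2), of C, symmetric] by simp
  also have "\<dots> = (\<Sum>j\<in>{0..<length (S!k)}. S!k!j)"
    using coupling_group[OF assms, of "\<lambda>x. x"] by simp
  also have "\<dots> = sum_list (S!k)" by (simp add: sum_list_sum_nth)
  finally show ?thesis .
qed

lemma coupling_psi:
  assumes "coupling S C" "k < length S" "0 < s"
  shows "sum_list (map (gpsi s) (S!k)) \<le> (\<Sum>js\<in>tuples S. gpsi s (C js))"
proof -
  have nn: "\<forall>js\<in>tuples S. 0 \<le> C js" using assms by (simp add: coupling_def)
  have "sum_list (map (gpsi s) (S!k)) = (\<Sum>j\<in>{0..<length (S!k)}. gpsi s (S!k!j))"
    by (rule sum_list_as_sum)
  also have "\<dots> = (\<Sum>j\<in>{0..<length (S!k)}. gpsi s (\<Sum>js\<in>{js\<in>tuples S. js ! k = j}. C js))"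
    using coupling_group[OF assms(1,2), of "gpsi s"] by simp
  also have "\<dots> \<le> (\<Sum>j\<in>{0..<length (S!k)}. \<Sum>js\<in>{js\<in>tuples S. js ! k = j}. gpsi s (C js))"
    by (intro sum_mono gpsi_sum) (use nn assms(3) finite_tuples in auto)
  also have "\<dots> = (\<Sum>js\<in>tuples S. gpsi s (C js))"
    by (rule group_tuples[OF assms(2)])
  finally show ?thesis .
qed

lemma has_integral_sum_list:
  assumes "\<forall>x\<in>set xs. ((f x) has_integral I x) T"
  shows "((\<lambda>s. sum_list (map (\<lambda>x. f x s) xs)) has_integral sum_list (map I xs)) T"
  using assms
proof (induction xs)
  case Nil then show ?case by (simp add: has_integral_0)
next
  case (Cons a xs) then show ?case by (simp add: has_integral_add)
qed

lemma sum_list_theta: "sum_list (map (\<lambda>x. (if x \<le> s then x else 0) * w) xs) = sum_list (filter (\<lambda>g. g \<le> s) xs) * (w::real)"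
  by (induction xs) (auto simp: distrib_right)

lemma sum_list_div: "sum_list (map (\<lambda>x. (f x - x) / d) xs) = (sum_list (map f xs) - sum_list xs) / (d::real)"
  by (induction xs) (auto simp: add_divide_distrib diff_divide_distrib)

theorem theorem6:
  fixes c :: real and S :: "real list list" and C :: "nat list \<Rightarrow> real" and G :: "real list"
  assumes "0 < c" and "c < 1"
    and "S \<noteq> []" and "\<forall>p\<in>set S. is_dist p"
    and "greedy S G"
    and "coupling S C"
  shows "Fcost_list c G \<le> (1/2 + 1 / (c * 2 powr c)) * Fcost_coupling c S C"
proof -
  have "\<forall>k<length S. S!k \<noteq> [] \<and> (\<forall>i<length (S!k). 0 \<le> S!k!i) \<and> sum_list (S!k) = 1"
  proof (intro allI impI)
    fix k assume k: "k < length S"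
    then have d: "is_dist (S!k)" using assms(4) by auto
    then have "sum_list (S!k) = 1" by (simp add: is_dist_def)
    moreover then have "S!k \<noteq> []" by auto
    moreover have "\<forall>i<length (S!k). 0 \<le> S!k!i" using d by (auto simp: is_dist_def)
    ultimately show "S!k \<noteq> [] \<and> (\<forall>i<length (S!k). 0 \<le> S!k!i) \<and> sum_list (S!k) = 1" by blast
  qed
  then have inv: "ginv S 1" using assms(3) by (simp add: ginv_def)
  have GM: "sum_list G = 1 \<and> (\<forall>g\<in>set G. 0 \<le> g) \<and>
     (\<forall>s>0. \<exists>k<length S. sum_list (filter (\<lambda>g. g \<le> s) G) \<le> sum_list (map (gpsi s) (S!k)))"
    by (rule greedy_main[OF assms(5) inv])
  have nnC: "\<forall>js\<in>tuples S. 0 \<le> C js" using assms(6) by (simp add: coupling_def)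
  have totC: "(\<Sum>js\<in>tuples S. C js) = 1"
    using coupling_total[OF assms(6), of 0] assms(3) inv by (simp add: ginv_def)
  have C1: "C js \<le> 1" if "js \<in> tuples S" for js
  proof -
    have "C js \<le> (\<Sum>js\<in>tuples S. C js)"
      by (rule member_le_sum) (use that nnC finite_tuples in auto)
    then show ?thesis using totC by simp
  qed
  have G1: "g \<le> 1" if "g \<in> set G" for g
    using member_le_sum_list[of g G] GM that by auto
  define w where "w = (\<lambda>s::real. s powr (c-2))"
  have I1: "((\<lambda>s. sum_list (map (\<lambda>x. (if x \<le> s then x else 0) * w s) G)) has_integral
      sum_list (map (\<lambda>x. (x powr c - x)/(1-c)) G)) {0..1}"
    unfolding w_def
    by (rule has_integral_sum_list) (use GM G1 assms(1,2) in \<open>auto intro!: int_theta\<close>)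
  have I2: "((\<lambda>s. \<Sum>js\<in>tuples S. gpsi s (C js) * w s) has_integral (\<Sum>js\<in>tuples S. Vpsi c (C js))) {0..1}"
    unfolding w_def
    by (rule has_integral_sum[OF finite_tuples]) (use nnC C1 assms(1,2) in \<open>auto intro!: int_gpsi\<close>)
  have le: "sum_list (map (\<lambda>x. (x powr c - x)/(1-c)) G) \<le> (\<Sum>js\<in>tuples S. Vpsi c (C js))"
  proof (rule has_integral_le[OF I1 I2])
    fix s :: real assume s: "s \<in> {0..1}"
    show "sum_list (map (\<lambda>x. (if x \<le> s then x else 0) * w s) G) \<le> (\<Sum>js\<in>tuples S. gpsi s (C js) * w s)"
    proof (cases "s = 0")
      case True then show ?thesis by (simp add: w_def)
    next
      case False
      then have sp: "s > 0" using s by auto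
      obtain k where k: "k < length S" "sum_list (filter (\<lambda>g. g \<le> s) G) \<le> sum_list (map (gpsi s) (S!k))"
        using GM sp by auto
      have "sum_list (filter (\<lambda>g. g \<le> s) G) \<le> (\<Sum>js\<in>tuples S. gpsi s (C js))"
        using k(2) coupling_psi[OF assms(6) k(1) sp] by linarith
      moreover have "0 \<le> w s" by (simp add: w_def)
      ultimately have "sum_list (filter (\<lambda>g. g \<le> s) G) * w s \<le> (\<Sum>js\<in>tuples S. gpsi s (C js)) * w s"
        by (rule mult_right_mono)
      then show ?thesis by (simp add: sum_list_theta sum_distrib_right)
    qed
  qed
  have "sum_list (map (\<lambda>x. (x powr c - x)/(1-c)) G) = (sum_list (map (\<lambda>x. x powr c) G) - 1)/(1-c)"
    using GM by (simp add: sum_list_div)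
  with le have "(sum_list (map (\<lambda>x. x powr c) G) - 1)/(1-c) \<le> (\<Sum>js\<in>tuples S. Vpsi c (C js))" by simp
  then have "sum_list (map (\<lambda>x. x powr c) G) - 1 \<le> (1-c) * (\<Sum>js\<in>tuples S. Vpsi c (C js))"
    using assms(1,2) by (simp add: divide_le_eq mult.commute)
  also have "\<dots> = (\<Sum>js\<in>tuples S. C js powr c / 2 + C js powr c / (c * 2 powr c) - C js)"
    unfolding sum_distrib_left using nnC assms(1,2) by (intro sum.cong refl Vpsi_eq) auto
  also have "\<dots> = (\<Sum>js\<in>tuples S. C js powr c) / 2 + (\<Sum>js\<in>tuples S. C js powr c) / (c * 2 powr c) - (\<Sum>js\<in>tuples S. C js)"
    by (simp only: sum.distrib sum_subtractf sum_divide_distrib)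
  also have "\<dots> = (1/2 + 1 / (c * 2 powr c)) * (\<Sum>js\<in>tuples S. C js powr c) - 1"
    using totC by (simp add: distrib_right)
  finally show ?thesis unfolding Fcost_list_def Fcost_coupling_def by simp
qed

end
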